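(* Let $\sigma:\mathbb{R}\to\mathbb{R}$ be $\sigma(x)=\operatorname{sgn}(x)x^2$. Then every nonzero point of $\mathbb{R}^2$ has a dense orbit in $\mathbb{R}^2$ under the action of $\Gamma(\sigma)$. Moreover, the set $\bigcup_{n=0}^{\infty}\bigcup_{k=0}^{\infty}E_\sigma^{-k}\big(\{E_\sigma^n(1,0)\}\big)$ is a discrete subset of $\mathbb{R}_{\geq 0}^2$.
   Context: For an increasing odd homeomorphism $\sigma:\mathbb{R}\to\mathbb{R}$, define $h_\sigma(x,y)=(x+\sigma^{-1}(y),y)$ and $v_\sigma(x,y)=(x,\sigma(x)+y)$ on $\mathbb{R}^2$, and let $\Gamma(\sigma)$ be the group generated by $h_\sigma,v_\sigma$. The generalized Euclidean algorithm is the map $E_\sigma:\mathbb{R}_{\geq0}^2\to\mathbb{R}_{\geq0}^2$ given by $E_\sigma(x,y)=(x-\sigma^{-1}(y),y)$ if $y<\sigma(x)$ and $E_\sigma(x,y)=(x,y-\sigma(x))$ if $y\geq\sigma(x)$; $E_\sigma^{-k}(S)$ denotes the preimage of $S$ under the $k$-th iterate. *)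

theory Defs
  imports "HOL-Analysis.Analysis"
begin

text \<open>The generators of Gamma(sigma), for an increasing odd homeomorphism sigma.
  The inverse of sigma is the library inverse inv sigma.\<close>

definition hmap :: "(real \<Rightarrow> real) \<Rightarrow> real \<times> real \<Rightarrow> real \<times> real" where
  "hmap \<sigma> p = (fst p + inv \<sigma> (snd p), snd p)"

definition vmap :: "(real \<Rightarrow> real) \<Rightarrow> real \<times> real \<Rightarrow> real \<times> real" where
  "vmap \<sigma> p = (fst p, \<sigma> (fst p) + snd p)"

inductive_set Gamma :: "(real \<Rightarrow> real) \<Rightarrow> (real \<times> real \<Rightarrow> real \<times> real) set"
  for \<sigma> :: "real \<Rightarrow> real" where
  Gamma_id: "id \<in> Gamma \<sigma>"
| Gamma_h: "g \<in> Gamma \<sigma> \<Longrightarrow> hmap \<sigma> \<circ> g \<in> Gamma \<sigma>"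
| Gamma_v: "g \<in> Gamma \<sigma> \<Longrightarrow> vmap \<sigma> \<circ> g \<in> Gamma \<sigma>"
| Gamma_hinv: "g \<in> Gamma \<sigma> \<Longrightarrow> inv (hmap \<sigma>) \<circ> g \<in> Gamma \<sigma>"
| Gamma_vinv: "g \<in> Gamma \<sigma> \<Longrightarrow> inv (vmap \<sigma>) \<circ> g \<in> Gamma \<sigma>"

definition orbit :: "(real \<Rightarrow> real) \<Rightarrow> real \<times> real \<Rightarrow> (real \<times> real) set" where
  "orbit \<sigma> p = (\<lambda>g. g p) ` Gamma \<sigma>"

definition quadrant :: "(real \<times> real) set" where
  "quadrant = {p. fst p \<ge> 0 \<and> snd p \<ge> 0}"

text \<open>The generalized Euclidean algorithm (meaningful on the quadrant).\<close>
definition Eucl :: "(real \<Rightarrow> real) \<Rightarrow> real \<times> real \<Rightarrow> real \<times> real" where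
  "Eucl \<sigma> p = (if snd p < \<sigma> (fst p) then (fst p - inv \<sigma> (snd p), snd p)
                 else (fst p, snd p - \<sigma> (fst p)))"

definition Eucl_preimage :: "(real \<Rightarrow> real) \<Rightarrow> nat \<Rightarrow> (real \<times> real) set \<Rightarrow> (real \<times> real) set" where
  "Eucl_preimage \<sigma> k S = {p \<in> quadrant. (Eucl \<sigma> ^^ k) p \<in> S}"

definition sigma_sq :: "real \<Rightarrow> real" where
  "sigma_sq x = sgn x * x\<^sup>2"

end

theory Submission
  imports Defs
begin

definition H :: "real \<times> real \<Rightarrow> real \<times> real" where
  "H p = (fst p + sqrt (snd p), snd p)"
definition Hi :: "real \<times> real \<Rightarrow> real \<times> real" where
  "Hi p = (fst p - sqrt (snd p), snd p)"
definition V :: "real \<times> real \<Rightarrow> real \<times> real" where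
  "V p = (fst p, snd p + fst p * \<bar>fst p\<bar>)"
definition Vi :: "real \<times> real \<Rightarrow> real \<times> real" where
  "Vi p = (fst p, snd p - fst p * \<bar>fst p\<bar>)"

definition inv4 :: "(real \<times> real) set \<Rightarrow> bool" where
  "inv4 S \<longleftrightarrow> (\<forall>q\<in>S. H q \<in> S \<and> Hi q \<in> S \<and> V q \<in> S \<and> Vi q \<in> S)"

lemma sigma_sq_eq: "sigma_sq x = x * \<bar>x\<bar>"
  by (cases "x \<ge> 0") (auto simp: sigma_sq_def power2_eq_square sgn_if)

lemma sqrt_sigma: "sqrt (x * \<bar>x\<bar>) = x"
proof (cases "x \<ge> 0")
  case True then show ?thesis by (simp add: abs_of_nonneg)
next
  case False
  then have "x * \<bar>x\<bar> = - (x*x)" by simp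
  then show ?thesis using False by (simp add: real_sqrt_minus)
qed

lemma sigma_sqrt: "sqrt y * \<bar>sqrt y\<bar> = y"
proof (cases "y \<ge> 0")
  case True then show ?thesis by simp
next
  case False
  then have "sqrt y = - sqrt (-y)" by (simp add: real_sqrt_minus)
  then show ?thesis using False by simp
qed

lemma inj_sigma: "inj sigma_sq"
  by (metis injI sigma_sq_eq sqrt_sigma)

lemma inv_sigma: "inv sigma_sq = sqrt"
  by (rule ext, rule inv_f_eq[OF inj_sigma]) (simp add: sigma_sq_eq sigma_sqrt)

lemma hmap_eq: "hmap sigma_sq = H"
  by (rule ext) (simp add: hmap_def H_def inv_sigma)
lemma vmap_eq: "vmap sigma_sq = V"
  by (rule ext) (simp add: vmap_def V_def sigma_sq_eq add.commute)

lemma H_Hi: "H (Hi p) = p" "Hi (H p) = p"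
  by (auto simp: H_def Hi_def)
lemma V_Vi: "V (Vi p) = p" "Vi (V p) = p"
  by (auto simp: V_def Vi_def)

lemma inv_hmap: "inv (hmap sigma_sq) = Hi"
proof -
  have "inj H" by (metis injI H_Hi(2))
  then show ?thesis unfolding hmap_eq by (intro ext inv_f_eq) (simp_all add: H_Hi)
qed
lemma inv_vmap: "inv (vmap sigma_sq) = Vi"
proof -
  have "inj V" by (metis injI V_Vi(2))
  then show ?thesis unfolding vmap_eq by (intro ext inv_f_eq) (simp_all add: V_Vi)
qed

lemma inv4_orbit: "inv4 (orbit sigma_sq p)"
  unfolding inv4_def orbit_def
proof (intro ballI conjI)
  fix q assume "q \<in> (\<lambda>g. g p) ` Gamma sigma_sq"
  then obtain g where g: "g \<in> Gamma sigma_sq" "q = g p" by auto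
  show "H q \<in> (\<lambda>g. g p) ` Gamma sigma_sq"
    by (rule image_eqI[where x="hmap sigma_sq \<circ> g"]) (simp add: g(2) hmap_eq, rule Gamma_h[OF g(1)])
  show "Hi q \<in> (\<lambda>g. g p) ` Gamma sigma_sq"
    by (rule image_eqI[where x="inv (hmap sigma_sq) \<circ> g"]) (simp add: g(2) inv_hmap, rule Gamma_hinv[OF g(1)])
  show "V q \<in> (\<lambda>g. g p) ` Gamma sigma_sq"
    by (rule image_eqI[where x="vmap sigma_sq \<circ> g"]) (simp add: g(2) vmap_eq, rule Gamma_v[OF g(1)])
  show "Vi q \<in> (\<lambda>g. g p) ` Gamma sigma_sq"
    by (rule image_eqI[where x="inv (vmap sigma_sq) \<circ> g"]) (simp add: g(2) inv_vmap, rule Gamma_vinv[OF g(1)])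
qed

lemma p_orbit: "p \<in> orbit sigma_sq p"
  unfolding orbit_def by (rule image_eqI[where x=id]) (simp_all add: Gamma.Gamma_id)

lemma cont_maps: "continuous_on S H" "continuous_on S Hi" "continuous_on S V" "continuous_on S Vi"
  unfolding H_def Hi_def V_def Vi_def by (intro continuous_intros)+

lemma inv4_closure:
  assumes "inv4 S" shows "inv4 (closure S)"
proof -
  have *: "f ` closure S \<subseteq> closure S" if "continuous_on (closure S) f" "\<forall>q\<in>S. f q \<in> S" for f
  proof (rule image_closure_subset[OF that(1) closed_closure])
    show "f ` S \<subseteq> closure S" using that(2) closure_subset by blast
  qed
  show ?thesis using assms unfolding inv4_def
    using *[OF cont_maps(1)] *[OF cont_maps(2)] *[OF cont_maps(3)] *[OF cont_maps(4)]
    by blast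
qed

lemma Hpow_nat:
  assumes "inv4 S" "(x, y) \<in> S"
  shows "(x + real n * sqrt y, y) \<in> S \<and> (x - real n * sqrt y, y) \<in> S"
proof (induction n)
  case 0 then show ?case using assms by simp
next
  case (Suc n)
  then have "H (x + real n * sqrt y, y) \<in> S" "Hi (x - real n * sqrt y, y) \<in> S"
    using assms(1) unfolding inv4_def by blast+
  then show ?case by (simp add: H_def Hi_def algebra_simps)
qed

lemma Hpow:
  assumes "inv4 S" "(x, y) \<in> S"
  shows "(x + real_of_int k * sqrt y, y) \<in> S"
proof (cases "k \<ge> 0")
  case True
  then obtain n where "k = int n" by (metis nonneg_eq_int)
  then show ?thesis using Hpow_nat[OF assms, of n] by simp
next
  case False
  then obtain n where "k = - int n" by (metis neg_int_cases zless_nat_eq_int_zless linorder_not_le)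
  then show ?thesis using Hpow_nat[OF assms, of n] by simp
qed

lemma Vpow_nat:
  assumes "inv4 S" "(x, y) \<in> S"
  shows "(x, y + real n * (x * \<bar>x\<bar>)) \<in> S \<and> (x, y - real n * (x * \<bar>x\<bar>)) \<in> S"
proof (induction n)
  case 0 then show ?case using assms by simp
next
  case (Suc n)
  then have "V (x, y + real n * (x * \<bar>x\<bar>)) \<in> S" "Vi (x, y - real n * (x * \<bar>x\<bar>)) \<in> S"
    using assms(1) unfolding inv4_def by blast+
  then show ?case by (simp add: V_def Vi_def algebra_simps)
qed

lemma Vpow:
  assumes "inv4 S" "(x, y) \<in> S"
  shows "(x, y + real_of_int k * (x * \<bar>x\<bar>)) \<in> S"
proof (cases "k \<ge> 0")
  case True
  then obtain n where "k = int n" by (metis nonneg_eq_int)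
  then show ?thesis using Vpow_nat[OF assms, of n] by simp
next
  case False
  then obtain n where "k = - int n" by (metis neg_int_cases zless_nat_eq_int_zless linorder_not_le)
  then show ?thesis using Vpow_nat[OF assms, of n] by simp
qed

lemma dist_le: "dist (a::real, b::real) (c, d) \<le> \<bar>a - c\<bar> + \<bar>b - d\<bar>"
  using sqrt_sum_squares_le_sum_abs[of "a-c" "b-d"] by (simp add: dist_Pair_Pair dist_real_def)

definition Aset :: "(real \<times> real) set \<Rightarrow> real set" where
  "Aset C = {s. s > 0 \<and> (\<forall>x>0. (x, x\<^sup>2 / s\<^sup>2) \<in> C)}"

definition free :: "(real \<times> real) set \<Rightarrow> real \<Rightarrow> real \<Rightarrow> bool" where
  "free C a b \<longleftrightarrow> 0 < a \<and> a < b \<and> (\<forall>s. a < s \<and> s < b \<longrightarrow> s \<notin> Aset C)"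

lemma inv_sq_isqrt: "0 < (x::real) \<Longrightarrow> 1/(1/sqrt x)\<^sup>2 = x"
  by (simp add: power_divide)

lemma inv_sq_less:
  fixes u w :: real
  assumes a: "0 < u" "0 < w" shows "(1/u\<^sup>2 < 1/w\<^sup>2) \<longleftrightarrow> (w < u)"
proof -
  have "1/u\<^sup>2 < 1/w\<^sup>2 \<longleftrightarrow> w\<^sup>2 < u\<^sup>2" using a
    by (simp add: field_simps)
  also have "\<dots> \<longleftrightarrow> w < u" using a
    using power2_less_imp_less[of w u] power_strict_mono[of w u 2] by auto
  finally show ?thesis .
qed

lemma len_ineq:
  fixes p q m :: real
  assumes "0 < q" "q < p" "p \<le> 1" "1 \<le> m"
  shows "2 * (1/sqrt (q+m) - 1/sqrt (p+m)) \<le> 1/sqrt q - 1/sqrt p"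
proof -
  define P where "P = sqrt p"
  define Q where "Q = sqrt q"
  define P' where "P' = sqrt (p+m)"
  define Q' where "Q' = sqrt (q+m)"
  have pos: "0 < P" "0 < Q" "0 < P'" "0 < Q'" using assms by (auto simp: P_def Q_def P'_def Q'_def)
  have sq: "P*P = p" "Q*Q = q" "P'*P' = p+m" "Q'*Q' = q+m" using assms
    by (auto simp: P_def Q_def P'_def Q'_def)
  have d1: "1/Q - 1/P = (p - q) / (P*Q*(P+Q))"
  proof -
    have e: "p - q = (P - Q)*(P+Q)" unfolding sq[symmetric] by algebra
    have "P + Q \<noteq> 0" using pos by simp
    then have "(p - q) / (P*Q*(P+Q)) = (P - Q)/(P*Q)" unfolding e by simp
    also have "\<dots> = 1/Q - 1/P" using pos by (simp add: diff_divide_distrib)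
    finally show ?thesis by simp
  qed
  have d2: "1/Q' - 1/P' = (p - q) / (P'*Q'*(P'+Q'))"
  proof -
    have e: "p - q = (P' - Q')*(P'+Q')"
    proof -
      have "(P' - Q')*(P'+Q') = P'*P' - Q'*Q'" by algebra
      then show ?thesis using sq by simp
    qed
    have "P' + Q' \<noteq> 0" using pos by simp
    then have "(p - q) / (P'*Q'*(P'+Q')) = (P' - Q')/(P'*Q')" unfolding e by simp
    also have "\<dots> = 1/Q' - 1/P'" using pos by (simp add: diff_divide_distrib)
    finally show ?thesis by simp
  qed
  have le1: "P \<le> P'" "Q \<le> Q'" using assms by (auto simp: P_def Q_def P'_def Q'_def)
  have "(2*P*Q)*(2*P*Q) = (2*p)*(2*q)" unfolding sq[symmetric] by algebra
  also have "\<dots> \<le> (p+m)*(q+m)"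
    using assms by (intro mult_mono) auto
  also have "\<dots> = (P'*Q')*(P'*Q')"
  proof -
    have "(P'*Q')*(P'*Q') = (P'*P')*(Q'*Q')" by algebra
    then show ?thesis using sq by simp
  qed
  finally have "(2*P*Q)\<^sup>2 \<le> (P'*Q')\<^sup>2" unfolding power2_eq_square .
  moreover have "0 \<le> P'*Q'" using pos by (simp add: less_imp_le)
  ultimately have k1: "2*P*Q \<le> P'*Q'" by (rule power2_le_imp_le)
  have k2: "(2*P*Q)*(P+Q) \<le> (P'*Q')*(P'+Q')"
  proof (rule mult_mono[OF k1])
    show "P + Q \<le> P' + Q'" using le1 by linarith
    show "0 \<le> P' * Q'" using pos by (simp add: less_imp_le)
    show "0 \<le> P + Q" using pos by linarith
  qed
  have k3: "(p - q) / (P'*Q'*(P'+Q')) \<le> (p - q) / ((2*P*Q)*(P+Q))"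
  proof (rule frac_le)
    show "0 \<le> p - q" using assms by linarith
    show "p - q \<le> p - q" by simp
    show "0 < (2*P*Q)*(P+Q)" using pos by simp
    show "(2*P*Q)*(P+Q) \<le> P'*Q'*(P'+Q')" using k2 by simp
  qed
  have "2 * ((p - q) / (P'*Q'*(P'+Q'))) \<le> 2 * ((p - q) / ((2*P*Q)*(P+Q)))"
    using k3 by (rule mult_left_mono) simp
  also have "\<dots> = (p - q) / (P*Q*(P+Q))"
  proof -
    have "(2*P*Q)*(P+Q) = 2*(P*Q*(P+Q))" by simp
    moreover have g: "\<And>x y::real. 2 * (x / (2*y)) = x / y" by simp
    ultimately show ?thesis by (simp only:)
  qed
  finally have "2 * ((p - q) / (P'*Q'*(P'+Q'))) \<le> (p - q) / (P*Q*(P+Q))" .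
  then have "2 * (1/Q' - 1/P') \<le> 1/Q - 1/P" unfolding d1 d2 .
  then show ?thesis by (simp only: P_def Q_def P'_def Q'_def)
qed

locale good =
  fixes C :: "(real \<times> real) set"
  assumes Ccl: "closed C" and Cinv: "inv4 C" and Cax: "\<forall>t>0. (t, 0) \<in> C"
begin

lemma A_one: "1 \<in> Aset C"
proof -
  have "(x, x\<^sup>2) \<in> C" if "x > 0" for x
  proof -
    have "V (x, 0) \<in> C" using Cinv Cax that unfolding inv4_def by blast
    then show ?thesis using that by (simp add: V_def power2_eq_square)
  qed
  then show ?thesis unfolding Aset_def by simp
qed

lemma A_plus1: assumes "s \<in> Aset C" shows "s + 1 \<in> Aset C"
proof -
  have s: "s > 0" and sA: "\<forall>x>0. (x, x\<^sup>2 / s\<^sup>2) \<in> C" using assms by (auto simp: Aset_def)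
  have "(x, x\<^sup>2 / (s+1)\<^sup>2) \<in> C" if "x > 0" for x
  proof -
    define y where "y = (x * s) / (s + 1)"
    have y: "y > 0" using s that by (simp add: y_def)
    have e: "y/s = x/(s+1)" using s by (simp add: y_def)
    have 1: "H (y, y\<^sup>2/s\<^sup>2) \<in> C" using Cinv sA y unfolding inv4_def by blast
    have 2: "y\<^sup>2/s\<^sup>2 = (x/(s+1))\<^sup>2" using e by (simp add: power_divide[symmetric])
    have 3: "sqrt ((x/(s+1))\<^sup>2) = x/(s+1)" using s that by simp
    have 4: "y + x/(s+1) = x"
    proof -
      have "y + x/(s+1) = (x * s + x)/(s+1)" by (simp add: y_def add_divide_distrib)
      also have "x * s + x = x * (s+1)" by (simp add: algebra_simps)
      finally show ?thesis using s by simp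
    qed
    have "H (y, y\<^sup>2/s\<^sup>2) = (x, (x/(s+1))\<^sup>2)" unfolding H_def 2 using 3 4 by simp
    with 1 show ?thesis by (simp add: power_divide)
  qed
  then show ?thesis using s unfolding Aset_def by simp
qed

lemma A_plusn: assumes "s \<in> Aset C" shows "s + real n \<in> Aset C"
proof (induction n)
  case 0 then show ?case using assms by simp
next
  case (Suc n)
  have "s + real (Suc n) = (s + real n) + 1" by simp
  then show ?case using A_plus1[OF Suc] by (simp only:)
qed

lemma A_V: assumes "s \<in> Aset C" shows "1/sqrt (1/s\<^sup>2 + 1) \<in> Aset C"
proof -
  have s: "s > 0" and sA: "\<forall>x>0. (x, x\<^sup>2 / s\<^sup>2) \<in> C" using assms by (auto simp: Aset_def)
  have t2: "(1/sqrt (1/s\<^sup>2 + 1))\<^sup>2 = 1/(1/s\<^sup>2 + 1)"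
    by (simp add: power_divide add_pos_pos)
  have "(x, x\<^sup>2 / (1/sqrt (1/s\<^sup>2 + 1))\<^sup>2) \<in> C" if "x > 0" for x
  proof -
    have "V (x, x\<^sup>2/s\<^sup>2) \<in> C" using Cinv sA that unfolding inv4_def by blast
    moreover have "x\<^sup>2 / (1/sqrt (1/s\<^sup>2 + 1))\<^sup>2 = x\<^sup>2/s\<^sup>2 + x * \<bar>x\<bar>"
      using that s unfolding t2 by (simp add: field_simps power2_eq_square)
    ultimately show ?thesis by (simp add: V_def)
  qed
  moreover have "0 < 1/s\<^sup>2 + 1" by (smt (verit) zero_le_divide_1_iff zero_le_power2)
  ultimately show ?thesis unfolding Aset_def by simp
qed

lemma A_Vm: assumes "s \<in> Aset C" shows "1/sqrt (1/s\<^sup>2 + real m) \<in> Aset C"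
proof (induction m)
  case 0
  have "s > 0" using assms by (simp add: Aset_def)
  then show ?case using assms by (simp add: real_sqrt_divide)
next
  case (Suc m)
  have s: "s > 0" using assms by (simp add: Aset_def)
  have "1/(1/sqrt (1/s\<^sup>2 + real m))\<^sup>2 = 1/s\<^sup>2 + real m"
    using s by (simp add: power_divide add_pos_nonneg)
  with A_V[OF Suc] show ?case by (simp add: add.assoc add.commute)
qed

lemma A_nat: "real n + 1 \<in> Aset C"
  using A_plusn[OF A_one, of n] by (simp add: add.commute)

lemma A_isq: "1/sqrt (1 + real m) \<in> Aset C"
  using A_Vm[OF A_one, of m] by simp

lemma A_pos: "s \<in> Aset C \<Longrightarrow> s > 0" by (simp add: Aset_def)

end

context good begin

lemma free_le1: assumes f: "free C a b" shows "b - a \<le> 1"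
proof (rule ccontr)
  assume c: "\<not> b - a \<le> 1"
  have a: "a > 0" using f by (simp add: free_def)
  define n where "n = nat \<lfloor>a\<rfloor>"
  have rn: "real n = of_int \<lfloor>a\<rfloor>" using a by (simp add: n_def)
  have "a < real n + 1" unfolding rn by linarith
  moreover have "real n + 1 < b" using c unfolding rn by linarith
  ultimately show False using f A_nat[of n] by (auto simp: free_def)
qed

lemma free_double: assumes f: "free C a b"
  shows "\<exists>a' b'. free C a' b' \<and> 2*(b-a) \<le> b' - a'"
proof -
  have a: "a > 0" "a < b" and nf: "\<And>s. a < s \<Longrightarrow> s < b \<Longrightarrow> s \<notin> Aset C"
    using f by (auto simp: free_def)
  define n where "n = nat \<lfloor>a\<rfloor>"
  have rn: "real n = of_int \<lfloor>a\<rfloor>" using a by (simp add: n_def)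
  have rn1: "real n \<le> a" "a < real n + 1" unfolding rn by linarith+
  have bn: "b \<le> real n + 1"
  proof (rule ccontr)
    assume "\<not> b \<le> real n + 1"
    then show False using nf[of "real n + 1"] A_nat[of n] rn1 by auto
  qed
  define a1 where "a1 = a - real n"
  define b1 where "b1 = b - real n"
  have nf1: "\<And>s. a1 < s \<Longrightarrow> s < b1 \<Longrightarrow> s \<notin> Aset C"
  proof
    fix s assume "a1 < s" "s < b1" "s \<in> Aset C"
    have "s + real n \<in> Aset C" using \<open>s \<in> Aset C\<close> by (rule A_plusn)
    then show False using nf[of "s + real n"] \<open>a1 < s\<close> \<open>s < b1\<close> by (auto simp: a1_def b1_def)
  qed
  have a1b1: "a1 < b1" "b1 \<le> 1" "0 \<le> a1" using a bn rn1 by (auto simp: a1_def b1_def)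
  have a1pos: "a1 > 0"
  proof (rule ccontr)
    assume "\<not> a1 > 0"
    then have a10: "a1 = 0" using a1b1 by simp
    have b1pos: "b1 > 0" using a1b1 a10 by simp
    define m where "m = nat \<lceil>1/b1\<^sup>2\<rceil>"
    have m: "1/b1\<^sup>2 \<le> real m" unfolding m_def by linarith
    define s where "s = 1/sqrt (1 + real m)"
    have sA: "s \<in> Aset C" unfolding s_def by (rule A_isq)
    have s0: "s > 0" unfolding s_def by simp
    have "1/s\<^sup>2 = 1 + real m" unfolding s_def by (rule inv_sq_isqrt) simp
    then have "1/b1\<^sup>2 < 1/s\<^sup>2" using m by simp
    then have "s < b1" using inv_sq_less[OF b1pos s0] by simp
    then show False using nf1[of s] sA s0 a10 by simp
  qed
  have b1pos: "b1 > 0" using a1pos a1b1 by simp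
  define m where "m = nat \<lfloor>1/b1\<^sup>2\<rfloor>"
  have b1ge: "1 \<le> 1/b1\<^sup>2"
  proof -
    have "b1\<^sup>2 \<le> 1" using a1b1 b1pos by (intro power_le_one) auto
    then show ?thesis using b1pos by (simp add: field_simps)
  qed
  have fl1: "1 \<le> \<lfloor>1/b1\<^sup>2\<rfloor>" using b1ge by (simp add: le_floor_iff)
  then have rm: "real m = of_int \<lfloor>1/b1\<^sup>2\<rfloor>" unfolding m_def by simp
  have m: "real m \<le> 1/b1\<^sup>2" "1/b1\<^sup>2 < real m + 1" "1 \<le> real m"
    unfolding rm using fl1 by linarith+
  have ab: "1/b1\<^sup>2 < 1/a1\<^sup>2" using inv_sq_less[OF b1pos a1pos] a1b1 by simp
  have am: "1/a1\<^sup>2 \<le> real m + 1"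
  proof (rule ccontr)
    assume c: "\<not> 1/a1\<^sup>2 \<le> real m + 1"
    define s where "s = 1/sqrt (1 + real m)"
    have sA: "s \<in> Aset C" unfolding s_def by (rule A_isq)
    have s0: "s > 0" unfolding s_def by simp
    have ss: "1/s\<^sup>2 = 1 + real m" unfolding s_def by (rule inv_sq_isqrt) simp
    have "s < b1" using inv_sq_less[OF b1pos s0] ss m by simp
    moreover have "a1 < s" using inv_sq_less[OF s0 a1pos] ss c by simp
    ultimately show False using nf1 sA by blast
  qed
  define p where "p = 1/a1\<^sup>2 - real m"
  define q where "q = 1/b1\<^sup>2 - real m"
  have pq: "0 \<le> q" "q < p" "p \<le> 1" using m ab am by (auto simp: p_def q_def)
  show ?thesis
  proof (cases "q = 0")
    case True
    have p0: "p > 0" using pq by simp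
    define N where "N = nat \<lceil>1/sqrt p\<rceil>"
    have N: "1/sqrt p < real N + 1" unfolding N_def by linarith
    have NA: "real N + 1 \<in> Aset C" by (rule A_nat)
    define s where "s = 1/sqrt (1/(real N + 1)\<^sup>2 + real m)"
    have sA: "s \<in> Aset C" unfolding s_def by (rule A_Vm[OF NA])
    have s0: "s > 0" unfolding s_def using m by (simp add: add_pos_nonneg)
    have ss: "1/s\<^sup>2 = 1/(real N + 1)\<^sup>2 + real m" unfolding s_def
      by (rule inv_sq_isqrt) (use m in \<open>simp add: add_pos_nonneg\<close>)
    have "s < b1" using inv_sq_less[OF b1pos s0] ss True by (simp add: q_def)
    moreover have "a1 < s"
    proof -
      have sp: "1/sqrt p > 0" using p0 by simp
      have "1/(real N + 1)\<^sup>2 < 1/(1/sqrt p)\<^sup>2" using inv_sq_less[of "real N + 1" "1/sqrt p"] N sp by simp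
      also have "1/(1/sqrt p)\<^sup>2 = p" using p0 by (rule inv_sq_isqrt)
      finally have "1/s\<^sup>2 < 1/a1\<^sup>2" using ss by (simp add: p_def)
      then show ?thesis using inv_sq_less[OF s0 a1pos] by simp
    qed
    ultimately show ?thesis using nf1 sA by blast
  next
    case False
    then have q0: "q > 0" using pq by simp
    define a' where "a' = 1/sqrt p"
    define b' where "b' = 1/sqrt q"
    have a'pos: "a' > 0" using pq q0 by (simp add: a'_def)
    have b'pos: "b' > 0" using q0 by (simp add: b'_def)
    have ia: "1/a'\<^sup>2 = p" unfolding a'_def by (rule inv_sq_isqrt) (use pq q0 in simp)
    have ib: "1/b'\<^sup>2 = q" unfolding b'_def by (rule inv_sq_isqrt) (use q0 in simp)
    have "a' < b'" using inv_sq_less[OF b'pos a'pos] ia ib pq by simp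
    moreover have "t \<notin> Aset C" if t: "a' < t" "t < b'" for t
    proof
      assume tA: "t \<in> Aset C"
      have t0: "t > 0" using t a'pos by simp
      define s where "s = 1/sqrt (1/t\<^sup>2 + real m)"
      have sA: "s \<in> Aset C" unfolding s_def by (rule A_Vm[OF tA])
      have "0 \<le> 1/t\<^sup>2" by simp
      then have pm: "0 < 1/t\<^sup>2 + real m" using m(3) by linarith
      have s0: "s > 0" unfolding s_def using pm by simp
      have ss: "1/s\<^sup>2 = 1/t\<^sup>2 + real m" unfolding s_def using pm by (rule inv_sq_isqrt)
      have "1/t\<^sup>2 < p" using inv_sq_less[OF t0 a'pos] ia t by simp
      moreover have "q < 1/t\<^sup>2" using inv_sq_less[OF b'pos t0] ib t by simp
      ultimately have "1/b1\<^sup>2 < 1/s\<^sup>2" "1/s\<^sup>2 < 1/a1\<^sup>2" using ss by (auto simp: p_def q_def)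
      then have "s < b1" "a1 < s" using inv_sq_less[OF b1pos s0] inv_sq_less[OF s0 a1pos] by auto
      then show False using nf1 sA by blast
    qed
    ultimately have fr: "free C a' b'" using a'pos by (auto simp: free_def)
    have "2 * (1/sqrt (q + real m) - 1/sqrt (p + real m)) \<le> 1/sqrt q - 1/sqrt p"
      by (rule len_ineq) (use pq q0 m in auto)
    moreover have "1/sqrt (q + real m) = b1" using b1pos by (simp add: q_def real_sqrt_divide)
    moreover have "1/sqrt (p + real m) = a1" using a1pos by (simp add: p_def real_sqrt_divide)
    moreover have "b1 - a1 = b - a" by (simp add: a1_def b1_def)
    ultimately have "2*(b-a) \<le> b' - a'" by (simp add: a'_def b'_def)
    then show ?thesis using fr by blast
  qed
qed

lemma no_free: "\<not> free C a b"
proof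
  assume f: "free C a b"
  have ab: "0 < b - a" using f by (simp add: free_def)
  have "\<exists>a' b'. free C a' b' \<and> 2^k*(b-a) \<le> b' - a'" for k
  proof (induction k)
    case 0 then show ?case using f by auto
  next
    case (Suc k)
    then obtain a' b' where "free C a' b'" "2^k*(b-a) \<le> b' - a'" by blast
    then obtain a'' b'' where "free C a'' b''" "2*(b'-a') \<le> b'' - a''" using free_double by blast
    then show ?case using \<open>2^k*(b-a) \<le> b' - a'\<close> by (intro exI[of _ a''] exI[of _ b'']) auto
  qed
  moreover obtain k where k: "1/(b-a) < 2^k" using real_arch_pow[of 2] by auto
  ultimately obtain a' b' where "free C a' b'" "2^k*(b-a) \<le> b' - a'" by blast
  moreover have "1 < 2^k*(b-a)" using k ab by (simp add: field_simps)
  ultimately show False using free_le1 by force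
qed

lemma A_all: assumes s: "s > 0" shows "s \<in> Aset C"
proof -
  have "\<exists>t. t \<in> Aset C \<and> s < t \<and> t < s + inverse (real (Suc n))" for n
    using no_free[of s "s + inverse (real (Suc n))"] s by (auto simp: free_def)
  then obtain f where f: "\<And>n. f n \<in> Aset C \<and> s < f n \<and> f n < s + inverse (real (Suc n))"
    by metis
  have "(\<lambda>n. s + inverse (real (Suc n))) \<longlonglongrightarrow> s + 0"
    by (intro tendsto_add tendsto_const LIMSEQ_inverse_real_of_nat)
  moreover have "\<forall>n. s \<le> f n" "\<forall>n. f n \<le> s + inverse (real (Suc n))" using f less_imp_le by blast+
  ultimately have lim: "f \<longlonglongrightarrow> s"
    by (intro tendsto_sandwich[of "\<lambda>n. s" f sequentially "\<lambda>n. s + inverse (real (Suc n))"])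
      (simp_all add: always_eventually)
  have "(x, x\<^sup>2/s\<^sup>2) \<in> C" if x: "x > 0" for x
  proof (rule closed_sequentially[OF Ccl])
    show "(x, x\<^sup>2/(f n)\<^sup>2) \<in> C" for n using f[of n] x by (auto simp: Aset_def)
    show "(\<lambda>n. (x, x\<^sup>2/(f n)\<^sup>2)) \<longlonglongrightarrow> (x, x\<^sup>2/s\<^sup>2)"
      using s by (intro tendsto_intros lim) auto
  qed
  then show ?thesis using s by (simp add: Aset_def)
qed

lemma Q1: assumes "x > 0" "y > 0" shows "(x, y) \<in> C"
proof -
  have "x / sqrt y \<in> Aset C" using assms by (intro A_all) simp
  then have "(x, x\<^sup>2/(x / sqrt y)\<^sup>2) \<in> C" using assms by (simp add: Aset_def)
  moreover have "x\<^sup>2/(x / sqrt y)\<^sup>2 = y" using assms by (simp add: power_divide)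
  ultimately show ?thesis by simp
qed

lemma UP: assumes "y > 0" shows "(x, y) \<in> C"
proof -
  obtain k where k: "\<bar>x\<bar> < real k * sqrt y" using ex_less_of_nat_mult[of "sqrt y" "\<bar>x\<bar>"] assms by auto
  have "(x + real k * sqrt y, y) \<in> C" using k assms by (intro Q1) auto
  from Hpow[OF Cinv this, of "- int k"] show ?thesis by simp
qed

lemma LOW: assumes "y < 0" shows "(x, y) \<in> C"
proof -
  have neg: "(x, y) \<in> C" if "x \<noteq> 0" for x
  proof -
    have x2: "x * x > 0" using that not_real_square_gt_zero by blast
    obtain M where M: "- y < real M * (x * x)" using ex_less_of_nat_mult[OF x2] by auto
    have up: "(x, y + real M * (x * x)) \<in> C" using M by (intro UP) simp
    show ?thesis
    proof (cases "x > 0")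
      case True
      from Vpow[OF Cinv up, of "- int M"] True show ?thesis by simp
    next
      case False
      from Vpow[OF Cinv up, of "int M"] False that show ?thesis by simp
    qed
  qed
  show ?thesis
  proof (cases "x = 0")
    case True
    have "sqrt y \<noteq> 0" using assms by simp
    then have "(sqrt y, y) \<in> C" by (rule neg)
    from Hpow[OF Cinv this, of "-1"] True show ?thesis by simp
  next
    case False then show ?thesis by (rule neg)
  qed
qed

lemma C_UNIV: "C = UNIV"
proof -
  have "(x, y) \<in> C" for x y
  proof (cases "y = 0")
    case False
    then show ?thesis using UP LOW by (cases "y > 0") auto
  next
    case True
    show ?thesis
    proof (cases "x = 0")
      case False
      then consider "x > 0" | "x < 0" using False linorder_neqE_linordered_idom by blast
      then show ?thesis
      proof cases
        case 1 then show ?thesis using Cax True by simp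
      next
        case 2
        have "(x, x*x) \<in> C" using 2 by (intro UP) (simp add: zero_less_mult_iff)
        from Vpow[OF Cinv this, of 1] 2 True show ?thesis by simp
      qed
    next
      case x0: True
      show ?thesis
      proof (rule closed_sequentially[OF Ccl])
        show "(inverse (real (Suc n)), 0) \<in> C" for n using Cax by simp
        show "(\<lambda>n. (inverse (real (Suc n)), 0::real)) \<longlonglongrightarrow> (x, y)"
          using tendsto_Pair[OF LIMSEQ_inverse_real_of_nat tendsto_const[of "0::real"]] x0 True by simp
      qed
    qed
  qed
  then show ?thesis by auto
qed

end

lemma P2:
  assumes S: "inv4 S" and sm: "\<forall>\<epsilon>>0. \<exists>x y. (x, y) \<in> S \<and> 0 < y \<and> y < \<epsilon>"
  shows "(t, 0) \<in> closure S"
  unfolding closure_approachable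
proof (intro allI impI)
  fix e :: real assume e: "e > 0"
  define \<epsilon> where "\<epsilon> = min (e/2) ((e/2)\<^sup>2)"
  have "\<epsilon> > 0" using e by (simp add: \<epsilon>_def)
  then obtain x y where xy: "(x, y) \<in> S" "0 < y" "y < \<epsilon>" using sm by blast
  have y1: "y < e/2" using xy by (simp add: \<epsilon>_def)
  have "y < (e/2)\<^sup>2" using xy by (simp add: \<epsilon>_def)
  then have "sqrt y < sqrt ((e/2)\<^sup>2)" by (rule real_sqrt_less_mono)
  then have y2: "sqrt y < e/2" using e by simp
  have sy: "sqrt y > 0" using xy by simp
  define k where "k = \<lceil>(t - x)/sqrt y\<rceil>"
  have k1: "(t - x)/sqrt y \<le> of_int k" "of_int k < (t - x)/sqrt y + 1" unfolding k_def by linarith+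
  have "(t - x) \<le> of_int k * sqrt y" using k1(1) sy by (simp add: divide_le_eq)
  moreover have "of_int k * sqrt y < (t - x) + sqrt y"
  proof -
    have "of_int k - 1 < (t - x)/sqrt y" using k1(2) by linarith
    then have "(of_int k - 1) * sqrt y < t - x" using sy by (simp add: less_divide_eq)
    then show ?thesis by (simp add: algebra_simps)
  qed
  ultimately have kk: "\<bar>x + of_int k * sqrt y - t\<bar> < sqrt y" by linarith
  have P: "(x + of_int k * sqrt y, y) \<in> S" by (rule Hpow[OF S xy(1)])
  have "dist (x + of_int k * sqrt y, y) (t, 0) \<le> \<bar>x + of_int k * sqrt y - t\<bar> + \<bar>y - 0\<bar>"
    by (rule dist_le)
  also have "\<dots> < e" using kk y1 y2 xy by simp
  finally show "\<exists>q\<in>S. dist q (t, 0) < e" using P by blast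
qed

lemma P3:
  assumes S: "inv4 S" and a: "a > 0" "(a, 0) \<in> S" and that: "t > 0"
  shows "(t, 0) \<in> closure S"
proof -
  have yax: "(0, Y) \<in> closure S" if Y: "Y > 0" for Y
    unfolding closure_approachable
  proof (intro allI impI)
    fix e :: real assume e: "e > 0"
    define d where "d = min (e/4) 1"
    have d: "d > 0" "d \<le> 1" "2*d < e" using e by (auto simp: d_def)
    obtain n where n: "a / d < real n" using reals_Archimedean2 by blast
    have np: "real n > 0" using n a d by (smt (verit) divide_pos_pos)
    define c where "c = (real n + 1) * a"
    have c: "c > 0" using a by (simp add: c_def)
    have p1: "V (a, 0) \<in> S" using S a unfolding inv4_def by blast
    then have "(a, a*a) \<in> S" using a(1) by (simp add: V_def)
    from Hpow_nat[OF S this, of n] have "(a + real n * a, a*a) \<in> S"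
      using a by (simp add: real_sqrt_mult_self)
    then have "(c, a*a) \<in> S" by (simp add: c_def algebra_simps)
    then have "Hi (V (c, a*a)) \<in> S" using S unfolding inv4_def by blast
    then have q: "(c - sqrt (a*a + c*c), a*a + c*c) \<in> S" using c by (simp add: V_def Hi_def)
    define \<delta> where "\<delta> = c - sqrt (a*a + c*c)"
    define Y0 where "Y0 = a*a + c*c"
    have dneg: "\<delta> < 0"
    proof -
      have "c < sqrt (a*a + c*c)" using a by (intro real_less_rsqrt) (simp add: power2_eq_square)
      then show ?thesis by (simp add: \<delta>_def)
    qed
    have "sqrt (a*a + c*c) \<le> sqrt ((c + a*a/c)\<^sup>2)"
    proof (subst real_sqrt_le_iff)
      have "(c + a*a/c)\<^sup>2 = c*c + 2*(a*a) + (a*a/c)\<^sup>2" using c by (simp add: power2_eq_square field_simps)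
      then show "a*a + c*c \<le> (c + a*a/c)\<^sup>2" by simp
    qed
    also have "\<dots> = c + a*a/c" using a c by simp
    finally have dabs: "\<bar>\<delta>\<bar> \<le> a*a/c" using dneg by (simp add: \<delta>_def)
    have "a*a/c = a/(real n + 1)" using a by (simp add: c_def)
    also have "\<dots> < d"
    proof -
      have "a < real n * d" using n d by (simp add: divide_less_eq mult.commute)
      also have "\<dots> \<le> (real n + 1) * d" using d by simp
      finally show ?thesis by (simp add: divide_less_eq mult.commute)
    qed
    finally have dd: "\<bar>\<delta>\<bar> < d" using dabs by linarith
    define D where "D = \<delta> * \<delta>"
    have D: "D > 0" using dneg by (simp add: D_def mult_neg_neg)
    have Dd: "D < d"
    proof -
      have "D = \<bar>\<delta>\<bar> * \<bar>\<delta>\<bar>" by (simp add: D_def abs_mult_self_eq)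
      also have "\<dots> < d * 1" using dd d by (intro mult_strict_mono) auto
      finally show ?thesis by simp
    qed
    define k where "k = \<lfloor>(Y0 - Y)/D\<rfloor>"
    have k1: "of_int k \<le> (Y0 - Y)/D" "(Y0 - Y)/D < of_int k + 1" unfolding k_def by linarith+
    have "of_int k * D \<le> Y0 - Y" using k1(1) D by (simp add: le_divide_eq)
    moreover have "Y0 - Y < of_int k * D + D" using k1(2) D by (simp add: divide_less_eq distrib_right)
    ultimately have kk: "\<bar>Y0 - of_int k * D - Y\<bar> < D" by linarith
    have "(\<delta>, Y0 + of_int k * (\<delta> * \<bar>\<delta>\<bar>)) \<in> S"
      using Vpow[OF S q[folded \<delta>_def Y0_def]] by simp
    moreover have "\<delta> * \<bar>\<delta>\<bar> = - D" using dneg by (simp add: D_def)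
    ultimately have P: "(\<delta>, Y0 - of_int k * D) \<in> S" by simp
    have "dist (\<delta>, Y0 - of_int k * D) (0, Y) \<le> \<bar>\<delta> - 0\<bar> + \<bar>Y0 - of_int k * D - Y\<bar>"
      by (rule dist_le)
    also have "\<dots> < e" using dd kk Dd d by simp
    finally show "\<exists>q\<in>S. dist q (0, Y) < e" using P by blast
  qed
  have cl: "inv4 (closure S)" using S by (rule inv4_closure)
  have "(0, t*t) \<in> closure S" using that by (intro yax) simp
  then have "Vi (H (0, t*t)) \<in> closure S" using cl unfolding inv4_def by blast
  then show ?thesis using that by (simp add: H_def Vi_def real_sqrt_mult_self)
qed

lemma descent:
  assumes S: "inv4 S" and e: "\<epsilon> > 0"
  shows "\<forall>x y. 0 < x \<longrightarrow> 0 < y \<longrightarrow> x < real n * sqrt \<epsilon> \<longrightarrow> (x, y) \<in> S \<longrightarrow>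
    (\<exists>a>0. (a, 0) \<in> S) \<or> (\<exists>x' y'. (x', y') \<in> S \<and> 0 < y' \<and> y' < \<epsilon>)"
proof (induction n)
  case 0 then show ?case by simp
next
  case (Suc n)
  show ?case
  proof (intro allI impI)
    fix x y assume x: "0 < x" and y: "0 < y" and xn: "x < real (Suc n) * sqrt \<epsilon>" and xy: "(x, y) \<in> S"
    show "(\<exists>a>0. (a, 0) \<in> S) \<or> (\<exists>x' y'. (x', y') \<in> S \<and> 0 < y' \<and> y' < \<epsilon>)"
    proof (cases "y < \<epsilon>")
      case True then show ?thesis using xy y by blast
    next
      case False
      have xx: "x * x > 0" using x by simp
      define m where "m = \<lfloor>y / (x*x)\<rfloor>"
      define y' where "y' = y - of_int m * (x*x)"
      have m1: "of_int m \<le> y/(x*x)" "y/(x*x) < of_int m + 1" unfolding m_def by linarith+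
      have "of_int m * (x*x) \<le> y" using m1(1) xx by (simp add: le_divide_eq)
      moreover have "y < of_int m * (x*x) + x*x"
      proof -
        have "y < (of_int m + 1) * (x*x)" using m1(2) xx by (simp add: divide_less_eq)
        then show ?thesis by (simp add: algebra_simps)
      qed
      ultimately have y'b: "0 \<le> y'" "y' < x*x" by (auto simp: y'_def)
      have "(x, y + of_int (- m) * (x * \<bar>x\<bar>)) \<in> S" by (rule Vpow[OF S xy])
      then have y'S: "(x, y') \<in> S" using x by (simp add: y'_def)
      show ?thesis
      proof (cases "y' = 0")
        case True then show ?thesis using y'S x by auto
      next
        case False
        then have y'p: "y' > 0" using y'b by simp
        show ?thesis
        proof (cases "y' < \<epsilon>")
          case True then show ?thesis using y'S y'p by blast
        next
          case False
          have "sqrt y' < sqrt (x*x)" by (rule real_sqrt_less_mono[OF y'b(2)])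
          then have sx: "sqrt y' < x" using x by (simp add: real_sqrt_mult_self)
          have se: "sqrt \<epsilon> \<le> sqrt y'" using False by simp
          have "(x + of_int (-1) * sqrt y', y') \<in> S" by (rule Hpow[OF S y'S])
          then have x'S: "(x - sqrt y', y') \<in> S" by simp
          have "real (Suc n) * sqrt \<epsilon> = sqrt \<epsilon> + real n * sqrt \<epsilon>" by (simp add: algebra_simps)
          then have "x - sqrt y' < real n * sqrt \<epsilon>" using xn se by linarith
          moreover have "0 < x - sqrt y'" using sx by simp
          ultimately show ?thesis using Suc.IH x'S y'p by blast
        qed
      qed
    qed
  qed
qed

lemma to_quadrant:
  assumes S: "inv4 S" and xy: "(x, y) \<in> S" and y: "y \<noteq> 0"
  shows "\<exists>x' y'. 0 < x' \<and> 0 < y' \<and> (x', y') \<in> S"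
proof (cases "y > 0")
  case True
  have "sqrt y > 0" using True by simp
  then obtain k where k: "\<bar>x\<bar> < real k * sqrt y" using ex_less_of_nat_mult by blast
  have "(x + of_int (int k) * sqrt y, y) \<in> S" by (rule Hpow[OF S xy])
  moreover have "0 < x + real k * sqrt y" using k by linarith
  ultimately show ?thesis using True by auto
next
  case False
  then have yn: "y < 0" using y by simp
  have sy: "sqrt y = - sqrt (-y)" by (simp add: real_sqrt_minus)
  have "sqrt (-y) > 0" using yn by simp
  then obtain k where k: "\<bar>x\<bar> < real k * sqrt (-y)" using ex_less_of_nat_mult by blast
  define x1 where "x1 = x + real k * sqrt (-y)"
  have x1: "x1 > 0" using k unfolding x1_def by linarith
  have "(x + of_int (- int k) * sqrt y, y) \<in> S" by (rule Hpow[OF S xy])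
  then have x1S: "(x1, y) \<in> S" by (simp add: x1_def sy)
  have "x1 * x1 > 0" using x1 by simp
  then obtain M where M: "- y < real M * (x1 * x1)" using ex_less_of_nat_mult by blast
  have "(x1, y + of_int (int M) * (x1 * \<bar>x1\<bar>)) \<in> S" by (rule Vpow[OF S x1S])
  then have "(x1, y + real M * (x1 * x1)) \<in> S" using x1 by simp
  moreover have "0 < y + real M * (x1 * x1)" using M by linarith
  ultimately show ?thesis using x1 by blast
qed

lemma axis:
  assumes p: "p \<noteq> (0, 0)" and t: "t > 0"
  shows "(t, 0) \<in> closure (orbit sigma_sq p)"
proof -
  define S where "S = orbit sigma_sq p"
  have S: "inv4 S" unfolding S_def by (rule inv4_orbit)
  have pS: "p \<in> S" unfolding S_def by (rule p_orbit)
  show ?thesis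
  proof (cases "\<exists>a>0. (a, 0) \<in> S")
    case True
    then obtain a where "a > 0" "(a, 0) \<in> S" by blast
    then show ?thesis using P3[OF S _ _ t] unfolding S_def by blast
  next
    case noax: False
    obtain x y where xy: "0 < x" "0 < y" "(x, y) \<in> S"
    proof -
      obtain p1 p2 where pp: "p = (p1, p2)" by (cases p)
      show ?thesis
      proof (cases "p2 = 0")
        case False then show ?thesis using to_quadrant[OF S pS[unfolded pp] False] that by blast
      next
        case True
        then have p1: "p1 \<noteq> 0" using p pp by simp
        have p1n: "p1 < 0" using noax p1 pS pp True by (metis linorder_neqE_linordered_idom)
        have "V (p1, 0) \<in> S" using S pS pp True unfolding inv4_def by blast
        then have "(p1, p1 * \<bar>p1\<bar>) \<in> S" by (simp add: V_def)
        moreover have "p1 * \<bar>p1\<bar> \<noteq> 0" using p1 by simp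
        ultimately show ?thesis using to_quadrant[OF S] that by blast
      qed
    qed
    have "\<forall>\<epsilon>>0. \<exists>x y. (x, y) \<in> S \<and> 0 < y \<and> y < \<epsilon>"
    proof (intro allI impI)
      fix \<epsilon> :: real assume e: "\<epsilon> > 0"
      have "sqrt \<epsilon> > 0" using e by simp
      then obtain n where "x < real n * sqrt \<epsilon>" using ex_less_of_nat_mult by blast
      then show "\<exists>x y. (x, y) \<in> S \<and> 0 < y \<and> y < \<epsilon>"
        using descent[OF S e, of n] xy noax by blast
    qed
    then show ?thesis using P2[OF S] unfolding S_def by blast
  qed
qed

theorem part1: "p \<noteq> (0, 0) \<Longrightarrow> closure (orbit sigma_sq p) = UNIV"
proof -
  assume p: "p \<noteq> (0, 0)"
  interpret good "closure (orbit sigma_sq p)"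
  proof
    show "closed (closure (orbit sigma_sq p))" by simp
    show "inv4 (closure (orbit sigma_sq p))" by (rule inv4_closure[OF inv4_orbit])
    show "\<forall>t>0. (t, 0) \<in> closure (orbit sigma_sq p)" using axis[OF p] by blast
  qed
  show ?thesis by (rule C_UNIV)
qed

abbreviation "E \<equiv> Eucl sigma_sq"

lemma E_eq: "E p = (if snd p < fst p * \<bar>fst p\<bar> then (fst p - sqrt (snd p), snd p)
                 else (fst p, snd p - fst p * \<bar>fst p\<bar>))"
  by (simp add: Eucl_def sigma_sq_eq inv_sigma)

lemma E10: "(E ^^ n) (1, 0) = (1, 0)"
proof (induction n)
  case 0 then show ?case by simp
next
  case (Suc n)
  have "E (1, 0) = (1, 0)" by (simp add: E_eq)
  then show ?case using Suc by simp
qed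

lemma Equad: assumes "p \<in> quadrant" shows "E p \<in> quadrant"
proof -
  obtain x y where p: "p = (x, y)" by (cases p)
  have x: "x \<ge> 0" and y: "y \<ge> 0" using assms p by (auto simp: quadrant_def)
  show ?thesis
  proof (cases "y < x * \<bar>x\<bar>")
    case True
    then have "y < x * x" using x by simp
    then have "sqrt y < sqrt (x * x)" by (rule real_sqrt_less_mono)
    then have "sqrt y < x" using x by (simp add: real_sqrt_mult_self)
    then show ?thesis using True p y by (simp add: E_eq quadrant_def)
  next
    case False
    then show ?thesis using p x by (simp add: E_eq quadrant_def)
  qed
qed

lemma E_iter: "(E ^^ Suc k) p = (E ^^ k) (E p)"
  by (simp only: funpow_Suc_right comp_apply)

lemma struct:
  "p \<in> quadrant \<Longrightarrow> (E ^^ k) p = (1, 0) \<Longrightarrow> p = (1, 0) \<or> (1 \<le> fst p \<and> 1 \<le> snd p)"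
proof (induction k arbitrary: p)
  case 0 then show ?case by simp
next
  case (Suc k)
  have q: "E p \<in> quadrant" using Suc.prems(1) by (rule Equad)
  have "(E ^^ k) (E p) = (1, 0)" using Suc.prems(2) by (simp only: E_iter)
  then have ih: "E p = (1, 0) \<or> (1 \<le> fst (E p) \<and> 1 \<le> snd (E p))" using Suc.IH q by blast
  obtain x y where p: "p = (x, y)" by (cases p)
  have x: "x \<ge> 0" and y: "y \<ge> 0" using Suc.prems p by (auto simp: quadrant_def)
  show ?case
  proof (cases "y < x * \<bar>x\<bar>")
    case True
    then have Ep: "E p = (x - sqrt y, y)" using p by (simp add: E_eq)
    have sy: "0 \<le> sqrt y" using y by simp
    from ih show ?thesis
    proof
      assume "E p = (1, 0)"
      then have "x - sqrt y = 1" "y = 0" using Ep by auto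
      then show ?thesis using p by simp
    next
      assume "1 \<le> fst (E p) \<and> 1 \<le> snd (E p)"
      then have "1 \<le> x - sqrt y" "1 \<le> y" using Ep by auto
      moreover have "1 \<le> x" using calculation sy by linarith
      ultimately show ?thesis using p by simp
    qed
  next
    case False
    then have Ep: "E p = (x, y - x * \<bar>x\<bar>)" using p by (simp add: E_eq)
    show ?thesis
    proof (cases "E p = (1, 0)")
      case True then show ?thesis using Ep p by auto
    next
      case False
      then have "1 \<le> x" "1 \<le> y - x * \<bar>x\<bar>" using ih Ep by auto
      moreover have "0 \<le> x * \<bar>x\<bar>" using x by simp
      ultimately have "1 \<le> x" "1 \<le> y" by linarith+
      then show ?thesis using p by simp
    qed
  qed
qed

lemma bound:
  "p \<in> quadrant \<Longrightarrow> (E ^^ k) p = (1, 0) \<Longrightarrow> \<exists>j. real j \<le> fst p + snd p \<and> (E ^^ j) p = (1, 0)"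
proof (induction k arbitrary: p)
  case 0 then show ?case by (intro exI[of _ 0]) auto
next
  case (Suc k)
  show ?case
  proof (cases "p = (1, 0)")
    case True then show ?thesis by (intro exI[of _ 0]) auto
  next
    case False
    then have ge: "1 \<le> fst p" "1 \<le> snd p" using struct[OF Suc.prems] by auto
    have q: "E p \<in> quadrant" using Suc.prems(1) by (rule Equad)
    have "(E ^^ k) (E p) = (1, 0)" using Suc.prems(2) by (simp only: E_iter)
    then obtain j where j: "real j \<le> fst (E p) + snd (E p)" "(E ^^ j) (E p) = (1, 0)"
      using Suc.IH q by blast
    have "fst (E p) + snd (E p) \<le> fst p + snd p - 1"
    proof (cases "snd p < fst p * \<bar>fst p\<bar>")
      case True
      have "1 \<le> sqrt (snd p)" using ge by simp
      then show ?thesis using True by (simp add: E_eq)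
    next
      case False
      have "1 * 1 \<le> fst p * \<bar>fst p\<bar>" using ge by (intro mult_mono) auto
      then show ?thesis using False by (simp add: E_eq)
    qed
    then show ?thesis using j by (intro exI[of _ "Suc j"]) (auto simp del: funpow.simps simp: E_iter)
  qed
qed

definition Dk :: "nat \<Rightarrow> (real \<times> real) set" where
  "Dk k = {p \<in> quadrant. (E ^^ k) p = (1, 0)}"

lemma Dk_finite: "finite (Dk k)"
proof (induction k)
  case 0
  have "Dk 0 \<subseteq> {(1, 0)}" by (auto simp: Dk_def)
  then show ?case by (rule finite_subset) simp
next
  case (Suc k)
  define pre1 where "pre1 = (\<lambda>q::real\<times>real. (fst q + sqrt (snd q), snd q))"
  define pre2 where "pre2 = (\<lambda>q::real\<times>real. (fst q, snd q + fst q * \<bar>fst q\<bar>))"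
  have "Dk (Suc k) \<subseteq> pre1 ` Dk k \<union> pre2 ` Dk k"
  proof
    fix p assume pD: "p \<in> Dk (Suc k)"
    then have pq: "p \<in> quadrant" and "(E ^^ k) (E p) = (1, 0)" by (auto simp del: funpow.simps simp: Dk_def E_iter)
    then have ED: "E p \<in> Dk k" using Equad by (auto simp: Dk_def)
    obtain x y where p: "p = (x, y)" by (cases p)
    show "p \<in> pre1 ` Dk k \<union> pre2 ` Dk k"
    proof (cases "y < x * \<bar>x\<bar>")
      case True
      then have "p = pre1 (E p)" using p by (simp add: E_eq pre1_def)
      then show ?thesis using ED by blast
    next
      case False
      then have "p = pre2 (E p)" using p by (simp add: E_eq pre2_def)
      then show ?thesis using ED by blast
    qed
  qed
  then show ?case using Suc by (meson finite_UnI finite_imageI finite_subset)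
qed

theorem part2:
  "(let D = (\<Union>n. \<Union>k. Eucl_preimage sigma_sq k {(Eucl sigma_sq ^^ n) (1, 0)})
       in D \<subseteq> quadrant \<and> discrete D)"
proof -
  define D where "D = (\<Union>n. \<Union>k. Eucl_preimage sigma_sq k {(Eucl sigma_sq ^^ n) (1, 0)})"
  have D: "D = (\<Union>k. Dk k)" unfolding D_def by (auto simp: E10 Eucl_preimage_def Dk_def)
  have sub: "D \<subseteq> quadrant" unfolding D by (auto simp: Dk_def)
  have "discrete D"
  proof (rule discreteI)
    fix p assume pD: "p \<in> D"
    define T where "T = D \<inter> cball p 1"
    define N where "N = nat \<lceil>fst p + snd p + 2\<rceil>"
    have "T \<subseteq> (\<Union>j\<in>{..N}. Dk j)"
    proof
      fix q assume qT: "q \<in> T"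
      then obtain k where "q \<in> Dk k" unfolding T_def D by auto
      then have qq: "q \<in> quadrant" "(E ^^ k) q = (1, 0)" by (auto simp: Dk_def)
      obtain j where j: "real j \<le> fst q + snd q" "(E ^^ j) q = (1, 0)" using bound[OF qq] by blast
      have "dist q p \<le> 1" using qT by (simp add: T_def dist_commute)
      then have "dist (fst q) (fst p) \<le> 1" "dist (snd q) (snd p) \<le> 1"
        using dist_fst_le[of q p] dist_snd_le[of q p] by linarith+
      then have "fst q + snd q \<le> fst p + snd p + 2" by (simp add: dist_real_def abs_le_iff)
      then have "j \<le> N" using j(1) unfolding N_def by linarith
      then show "q \<in> (\<Union>j\<in>{..N}. Dk j)" using qq j by (auto simp: Dk_def)
    qed
    then have fT: "finite T" by (rule finite_subset) (simp add: Dk_finite)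
    obtain \<delta> where \<delta>: "\<delta> > 0" "\<forall>x\<in>T. x \<noteq> p \<longrightarrow> \<delta> \<le> dist p x"
      using finite_set_avoid[OF fT] by blast
    show "p isolated_in D"
      unfolding isolated_in_dist_Ex_iff
    proof (intro conjI exI[of _ "min \<delta> 1"])
      show "p \<in> D" by (rule pD)
      show "min \<delta> 1 > 0" using \<delta> by simp
      show "\<forall>y\<in>D. dist p y < min \<delta> 1 \<longrightarrow> y = p"
      proof (intro ballI impI)
        fix y assume yD: "y \<in> D" and d: "dist p y < min \<delta> 1"
        then have "y \<in> T" by (simp add: T_def dist_commute)
        then show "y = p" using \<delta> d by force
      qed
    qed
  qed
  then show ?thesis using sub unfolding D_def Let_def by blast
qed

theorem theorem2:
  shows "(\<forall>p :: real \<times> real. p \<noteq> (0, 0) \<longrightarrow> closure (orbit sigma_sq p) = UNIV)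
    \<and> (let D = (\<Union>n. \<Union>k. Eucl_preimage sigma_sq k {(Eucl sigma_sq ^^ n) (1, 0)})
       in D \<subseteq> quadrant \<and> discrete D)"
  using part1 part2 by blast

end
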